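(* Let $c_0\in\mathbb C$ with $c_0\notin\{-1,-3,-5,\dots\}$. Then for all $0\le k\le n$, $$E_{n,k}(-1,2;c_0,0)=(c_0)^{\overline n}\frac{(-\frac n2)^{\overline k}(-\frac n2+\frac12)^{\overline k}}{k!\,(\frac{c_0}2+\frac12)^{\overline k}},\qquad E_{n,k}(-1,2;c_0+1,1)=(c_0+1)^{\overline n}\frac{(-\frac n2)^{\overline k}(-\frac n2-\frac12)^{\overline k}}{k!\,(\frac{c_0}2+\frac12)^{\overline k}}.$$ These are nonzero only if $0\le k\le\lfloor n/2\rfloor$, resp. $0\le k\le\lfloor (n+1)/2\rfloor$. Equivalently, the $n$th row polynomials are $(c_0)^{\overline n}\,{}_2F_1(-\frac n2,-\frac n2+\frac12;\frac{c_0}2+\frac12\mid t)$, resp. $(c_0+1)^{\overline n}\,{}_2F_1(-\frac n2,-\frac n2-\frac12;\frac{c_0}2+\frac12\mid t)$.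
   Context: Generalized Eulerian numbers $E_{n,k}(a,b;c_0,c_\infty)$: defined by $E_{0,0}=1$, $E_{n,k}=0$ if $n<0$, $k<0$ or $k>n$, and $E_{n+1,k+1}=[-an+b(k+1)+c_0]E_{n,k+1}+[(a+b)n-bk+c_\infty]E_{n,k}$ for $n\ge0$, $k\in\mathbb Z$; row polynomial $\sum_{k=0}^nE_{n,k}t^k$. $x^{\overline k}=x(x+1)\cdots(x+k-1)$; ${}_2F_1(A,B;C\mid w)=\sum_{k\ge0}\frac{A^{\overline k}B^{\overline k}}{k!\,C^{\overline k}}w^k$. *)

theory Defs
  imports Complex_Main
begin

text \<open>Generalized Eulerian numbers E_{n,k}(a,b;c0,cinf), with k ranging over the integers.\<close>
fun genEuler :: "complex \<Rightarrow> complex \<Rightarrow> complex \<Rightarrow> complex \<Rightarrow> nat \<Rightarrow> int \<Rightarrow> complex" where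
  "genEuler a b c0 ci 0 k = (if k = 0 then 1 else 0)"
| "genEuler a b c0 ci (Suc n) k =
     (if k < 0 \<or> k > int (Suc n) then 0
      else (- a * of_nat n + b * of_int k + c0) * genEuler a b c0 ci n k
         + ((a + b) * of_nat n - b * of_int (k - 1) + ci) * genEuler a b c0 ci n (k - 1))"

definition rowPoly :: "complex \<Rightarrow> complex \<Rightarrow> complex \<Rightarrow> complex \<Rightarrow> nat \<Rightarrow> complex \<Rightarrow> complex" where
  "rowPoly a b c0 ci n t = (\<Sum>k\<le>n. genEuler a b c0 ci n (int k) * t ^ k)"

definition hyp2F1 :: "complex \<Rightarrow> complex \<Rightarrow> complex \<Rightarrow> complex \<Rightarrow> complex" where
  "hyp2F1 A B C w = (\<Sum>k. pochhammer A k * pochhammer B k / (fact k * pochhammer C k) * w ^ k)"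

end

theory Submission imports Defs begin

definition Qf :: "complex \<Rightarrow> nat \<Rightarrow> complex" where
  "Qf x k = (\<Prod>i<2*k. x - of_nat i)"
definition Bd :: "complex \<Rightarrow> nat \<Rightarrow> complex" where
  "Bd c k = 4^k * fact k * pochhammer (c/2+1/2) k"

lemma Qf_Suc: "Qf x (Suc j) = Qf x j * ((x - 2*of_nat j) * (x - 2*of_nat j - 1))"
  by (simp add: Qf_def algebra_simps)

lemma Qf_Suc1: "Qf (x+1) (Suc j) = (x+1) * (x - 2*of_nat j) * Qf x j"
proof -
  have "Qf (x+1) (Suc j) = (\<Prod>i<Suc (Suc (2*j)). x + 1 - of_nat i)" by (simp add: Qf_def)
  also have "\<dots> = (x+1) * (\<Prod>i<Suc (2*j). x - of_nat i)"
    by (subst prod.lessThan_Suc_shift) (simp add: algebra_simps)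
  also have "\<dots> = (x+1) * (x - 2*of_nat j) * Qf x j" by (simp add: Qf_def)
  finally show ?thesis .
qed

lemma Qf_zero: "m < 2*k \<Longrightarrow> Qf (of_nat m) k = 0"
  unfolding Qf_def by (rule prod_zero) auto

lemma Bd_Suc: "Bd c (Suc j) = Bd c j * (2 * of_nat (Suc j) * (c + 2*of_nat j + 1))"
  by (simp add: Bd_def pochhammer_Suc algebra_simps)

lemma genEuler_neg: "k < 0 \<Longrightarrow> genEuler a b c ci n k = 0"
  by (induction n arbitrary: k) auto

lemma closed:
  fixes c0 :: complex and s :: nat
  assumes s: "s \<le> 1" and nz: "\<forall>j. c0 + 2*of_nat j + 1 \<noteq> 0"
  shows "genEuler (-1) 2 (c0 + of_nat s) (of_nat s) n (int k)
     = pochhammer (c0 + of_nat s) n * Qf (of_nat (n+s)) k / Bd c0 k"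
proof (induction n arbitrary: k)
  case 0
  show ?case
  proof (cases k)
    case 0 then show ?thesis by (simp add: Qf_def Bd_def)
  next
    case (Suc j)
    then have "Qf (of_nat s) k = 0" using s by (intro Qf_zero) auto
    then show ?thesis using Suc by simp
  qed
next
  case (Suc n)
  show ?case
  proof (cases "k > n+1")
    case True
    then have "Qf (of_nat (Suc n + s)) k = 0" using s by (intro Qf_zero) auto
    then show ?thesis using True by simp
  next
    case False
    show ?thesis
    proof (cases k)
      case 0
      then show ?thesis using Suc.IH[of 0]
        by (simp add: genEuler_neg Qf_def Bd_def pochhammer_Suc algebra_simps)
    next
      case (Suc j)
      define x :: complex where "x = of_nat (n+s)"
      have x1: "of_nat (Suc n + s) = x + 1" by (simp add: x_def)
      have d: "c0 + 2*of_nat j + 1 \<noteq> 0" using nz by blast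
      have b: "Bd c0 j \<noteq> 0" unfolding Bd_def using nz
      proof -
        have "pochhammer (c0/2+1/2) j \<noteq> 0"
        proof
          assume "pochhammer (c0/2+1/2) j = 0"
          then obtain i where "c0/2+1/2 = - of_nat i" by (auto simp: pochhammer_eq_0_iff)
          then have "c0 = -(2*of_nat i) - 1" by (simp add: field_simps)
          then have "c0 + 2*of_nat i + 1 = 0" by simp
          then show False using nz by blast
        qed
        then show "4 ^ j * fact j * pochhammer (c0 / 2 + 1 / 2) j \<noteq> 0" by simp
      qed
      have ik: "int k - 1 = int j" using Suc by simp
      have e: "genEuler (-1) 2 (c0 + of_nat s) (of_nat s) (Suc n) (int k)
        = (of_nat n + 2 * of_nat k + (c0 + of_nat s)) * genEuler (-1) 2 (c0 + of_nat s) (of_nat s) n (int k)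
          + (of_nat n - 2 * of_nat j + of_nat s) * genEuler (-1) 2 (c0 + of_nat s) (of_nat s) n (int j)"
        using False Suc by (simp add: ik algebra_simps)
      have q1: "Qf (x+1) k = (x+1)*(x-2*of_nat j)*Qf x j" using Qf_Suc1 Suc by simp
      have q0: "Qf x k = Qf x j * ((x - 2*of_nat j) * (x - 2*of_nat j - 1))" using Qf_Suc Suc by simp
      have bk: "Bd c0 k = Bd c0 j * (2 * of_nat (Suc j) * (c0 + 2*of_nat j + 1))" using Bd_Suc Suc by simp
      have pS: "pochhammer (c0 + of_nat s) (Suc n) = pochhammer (c0 + of_nat s) n * (c0 + of_nat s + of_nat n)"
        by (simp add: pochhammer_Suc)
      have two: "(2::complex) * of_nat (Suc j) \<noteq> 0" by (simp del: of_nat_Suc)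
      have xs: "of_nat n + of_nat s = x" by (simp add: x_def)
      show ?thesis
        unfolding e Suc.IH x1 x_def[symmetric] q1 q0 bk pS
        using d b two apply (simp add: divide_simps del: of_nat_Suc)
        apply (simp add: algebra_simps xs[symmetric] Suc)
        done
    qed
  qed
qed


lemma pochprod: "pochhammer (-x/2) k * pochhammer (-x/2+1/2) k = Qf x k / 4^k"
proof (induction k)
  case 0 then show ?case by (simp add: Qf_def)
next
  case (Suc k)
  have "pochhammer (-x/2) (Suc k) * pochhammer (-x/2+1/2) (Suc k)
     = (pochhammer (-x/2) k * pochhammer (-x/2+1/2) k) * ((-x/2 + of_nat k) * (-x/2+1/2+of_nat k))"
    by (simp add: pochhammer_Suc algebra_simps)
  also have "\<dots> = Qf x k / 4^k * ((x - 2*of_nat k) * (x - 2*of_nat k - 1) / 4)"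
    unfolding Suc.IH by (simp add: field_simps)
  also have "\<dots> = Qf x (Suc k) / 4^Suc k" by (simp add: Qf_Suc field_simps)
  finally show ?case .
qed

lemma Bd_nz:
  fixes c0 :: complex
  assumes nz: "\<forall>j. c0 + 2*of_nat j + 1 \<noteq> 0"
  shows "pochhammer (c0/2+1/2) j \<noteq> 0"
proof
  assume "pochhammer (c0/2+1/2) j = 0"
  then obtain i where "c0/2+1/2 = - of_nat i" by (auto simp: pochhammer_eq_0_iff)
  then have "c0 = -(2*of_nat i) - 1" by (simp add: field_simps)
  then have "c0 + 2*of_nat i + 1 = 0" by simp
  then show False using nz by blast
qed

lemma formA:
  fixes c0 :: complex
  assumes nz: "\<forall>j. c0 + 2*of_nat j + 1 \<noteq> 0"
  shows "genEuler (-1) 2 c0 0 n (int k) =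
              pochhammer c0 n * (pochhammer (- of_nat n / 2) k * pochhammer (- of_nat n / 2 + 1/2) k
                / (fact k * pochhammer (c0 / 2 + 1/2) k))"
proof -
  have "genEuler (-1) 2 c0 0 n (int k) = pochhammer c0 n * Qf (of_nat n) k / Bd c0 k"
    using closed[OF _ nz, of 0 n k] by simp
  then show ?thesis unfolding pochprod Bd_def using Bd_nz[OF nz, of k] by simp
qed

lemma formB:
  fixes c0 :: complex
  assumes nz: "\<forall>j. c0 + 2*of_nat j + 1 \<noteq> 0"
  shows "genEuler (-1) 2 (c0 + 1) 1 n (int k) =
              pochhammer (c0 + 1) n * (pochhammer (- of_nat n / 2) k * pochhammer (- of_nat n / 2 - 1/2) k
                / (fact k * pochhammer (c0 / 2 + 1/2) k))"
proof -
  have "genEuler (-1) 2 (c0+1) 1 n (int k) = pochhammer (c0+1) n * Qf (of_nat (n+1)) k / Bd c0 k"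
    using closed[OF _ nz, of 1 n k] by simp
  moreover have "pochhammer (- of_nat n / 2) k * pochhammer (- of_nat n / 2 - 1/2) k
      = Qf (of_nat (n+1)) k / 4^k"
  proof -
    have "pochhammer (- of_nat n / 2) k * pochhammer (- of_nat n / 2 - 1/2) k
      = pochhammer (- of_nat (n+1) / 2 :: complex) k * pochhammer (- of_nat (n+1) / 2 + 1/2) (k::nat)"
    proof -
      have a1: "- of_nat (n+1)/2 + 1/2 = (- of_nat n/2 ::complex)" by (simp add: field_simps)
      have a2: "- of_nat (n+1)/2 = (- of_nat n/2 - 1/2::complex)" by (simp add: field_simps)
      show ?thesis unfolding a1 a2 by (simp add: mult.commute)
    qed
    then show ?thesis by (simp only: pochprod)
  qed
  ultimately show ?thesis unfolding Bd_def using Bd_nz[OF nz, of k] by simp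
qed

lemma vanish:
  fixes c0 :: complex and s :: nat
  assumes s: "s \<le> 1" and nz: "\<forall>j. c0 + 2*of_nat j + 1 \<noteq> 0"
    and ne: "genEuler (-1) 2 (c0 + of_nat s) (of_nat s) n k \<noteq> 0"
  shows "0 \<le> k \<and> k \<le> int ((n + s) div 2)"
proof -
  have k0: "0 \<le> k" using ne genEuler_neg by force
  then obtain k' where k': "k = int k'" by (metis nonneg_int_cases)
  have "\<not> n + s < 2*k'"
  proof
    assume "n + s < 2*k'"
    then have "Qf (of_nat (n+s)) k' = 0" by (rule Qf_zero)
    then show False using ne closed[OF s nz, of n k'] k' by simp
  qed
  then show ?thesis using k0 k' by simp
qed

theorem mainTheorem18:
  fixes c0 :: complex
  assumes "\<forall>m::nat. c0 \<noteq> - of_nat (2 * m + 1)"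
  shows "(\<forall>n k::nat. k \<le> n \<longrightarrow>
            genEuler (-1) 2 c0 0 n (int k) =
              pochhammer c0 n * (pochhammer (- of_nat n / 2) k * pochhammer (- of_nat n / 2 + 1/2) k
                / (fact k * pochhammer (c0 / 2 + 1/2) k))
          \<and> genEuler (-1) 2 (c0 + 1) 1 n (int k) =
              pochhammer (c0 + 1) n * (pochhammer (- of_nat n / 2) k * pochhammer (- of_nat n / 2 - 1/2) k
                / (fact k * pochhammer (c0 / 2 + 1/2) k)))
       \<and> (\<forall>(n::nat) (k::int). genEuler (-1) 2 c0 0 n k \<noteq> 0 \<longrightarrow> 0 \<le> k \<and> k \<le> int (n div 2))
       \<and> (\<forall>(n::nat) (k::int). genEuler (-1) 2 (c0 + 1) 1 n k \<noteq> 0 \<longrightarrow> 0 \<le> k \<and> k \<le> int ((n + 1) div 2))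
       \<and> (\<forall>(n::nat) (t::complex).
            rowPoly (-1) 2 c0 0 n t =
              pochhammer c0 n * hyp2F1 (- of_nat n / 2) (- of_nat n / 2 + 1/2) (c0 / 2 + 1/2) t
          \<and> rowPoly (-1) 2 (c0 + 1) 1 n t =
              pochhammer (c0 + 1) n * hyp2F1 (- of_nat n / 2) (- of_nat n / 2 - 1/2) (c0 / 2 + 1/2) t)"
proof -
  have nz: "\<forall>j. c0 + 2*of_nat j + 1 \<noteq> 0"
  proof
    fix j :: nat
    show "c0 + 2*of_nat j + 1 \<noteq> 0"
    proof
      assume "c0 + 2*of_nat j + 1 = 0"
      then have "c0 = - of_nat (2*j+1)" by (subst eq_neg_iff_add_eq_0) (simp add: algebra_simps)
      then show False using assms by blast
    qed
  qed
  have P1: "\<forall>n k::nat. k \<le> n \<longrightarrow>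
            genEuler (-1) 2 c0 0 n (int k) =
              pochhammer c0 n * (pochhammer (- of_nat n / 2) k * pochhammer (- of_nat n / 2 + 1/2) k
                / (fact k * pochhammer (c0 / 2 + 1/2) k))
          \<and> genEuler (-1) 2 (c0 + 1) 1 n (int k) =
              pochhammer (c0 + 1) n * (pochhammer (- of_nat n / 2) k * pochhammer (- of_nat n / 2 - 1/2) k
                / (fact k * pochhammer (c0 / 2 + 1/2) k))"
    using formA[OF nz] formB[OF nz] by blast
  have P2: "\<forall>(n::nat) (k::int). genEuler (-1) 2 c0 0 n k \<noteq> 0 \<longrightarrow> 0 \<le> k \<and> k \<le> int (n div 2)"
    using vanish[OF _ nz, of 0] by simp
  have P3: "\<forall>(n::nat) (k::int). genEuler (-1) 2 (c0 + 1) 1 n k \<noteq> 0 \<longrightarrow> 0 \<le> k \<and> k \<le> int ((n + 1) div 2)"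
    using vanish[OF _ nz, of 1] by simp
  have P4: "rowPoly (-1) 2 c0 0 n t =
              pochhammer c0 n * hyp2F1 (- of_nat n / 2) (- of_nat n / 2 + 1/2) (c0 / 2 + 1/2) t"
    for n t
  proof -
    let ?f = "\<lambda>k. pochhammer (- of_nat n / 2) k * pochhammer (- of_nat n / 2 + 1/2) k
                / (fact k * pochhammer (c0 / 2 + 1/2) k) * t ^ k"
    have "hyp2F1 (- of_nat n / 2) (- of_nat n / 2 + 1/2) (c0 / 2 + 1/2) t = sum ?f {..n}"
      unfolding hyp2F1_def
    proof (rule suminf_finite)
      fix k assume "k \<notin> {..n}"
      then have "Qf (of_nat n) k = 0" by (intro Qf_zero) auto
      then show "?f k = 0" by (simp only: pochprod) simp
    qed simp
    then show ?thesis unfolding rowPoly_def formA[OF nz] by (simp add: sum_distrib_left mult.assoc)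
  qed
  have P5: "rowPoly (-1) 2 (c0 + 1) 1 n t =
              pochhammer (c0 + 1) n * hyp2F1 (- of_nat n / 2) (- of_nat n / 2 - 1/2) (c0 / 2 + 1/2) t"
    for n t
  proof -
    let ?f = "\<lambda>k. pochhammer (- of_nat n / 2) k * pochhammer (- of_nat n / 2 - 1/2) k
                / (fact k * pochhammer (c0 / 2 + 1/2) k) * t ^ k"
    have "hyp2F1 (- of_nat n / 2) (- of_nat n / 2 - 1/2) (c0 / 2 + 1/2) t = sum ?f {..n}"
      unfolding hyp2F1_def
    proof (rule suminf_finite)
      fix k assume k: "k \<notin> {..n}"
      have "Qf (of_nat (n+1)) k = 0" using k by (intro Qf_zero) auto
      moreover have "pochhammer (- of_nat n / 2) k * pochhammer (- of_nat n / 2 - 1/2) k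
         = pochhammer (- of_nat (n+1) / 2 :: complex) k * pochhammer (- of_nat (n+1) / 2 + 1/2) (k::nat)"
      proof -
        have a1: "- of_nat (n+1)/2 + 1/2 = (- of_nat n/2 ::complex)" by (simp add: field_simps)
        have a2: "- of_nat (n+1)/2 = (- of_nat n/2 - 1/2::complex)" by (simp add: field_simps)
        show ?thesis unfolding a1 a2 by (simp add: mult.commute)
      qed
      ultimately show "?f k = 0" by (simp only: pochprod) simp
    qed simp
    then show ?thesis unfolding rowPoly_def formB[OF nz] by (simp add: sum_distrib_left mult.assoc)
  qed
  show ?thesis using P1 P2 P3 P4 P5 by blast
qed

end
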